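(* Let $\mathcal{M}$ be a separable metric space, let $f:\mathcal{M}\to\mathcal{M}$ be a continuous bijection with continuous inverse, and let $\mathcal{X}\subseteq\mathcal{M}$ be forward invariant under $f$ and path connected. Consider $x_{k+1}=f(x_k)$ on $\mathcal{X}$, with set of $\omega$-limit sets $\mathcal{W}$ and set of $\alpha$-limit sets $\mathcal{A}$. Suppose: every trajectory in $\mathcal{X}$ is forward precompact or backward precompact in $\mathcal{X}$; $\mathcal{W}\cup\mathcal{A}$ is countable; for every $\Omega\in\mathcal{W}$ there is a trajectory forward precompact in $\mathcal{X}$ starting in $D^+_{\mathcal{X}}(\Omega)$, and for every $\Gamma\in\mathcal{A}$ a trajectory backward precompact in $\mathcal{X}$ starting in $D^-_{\mathcal{X}}(\Gamma)$. If $\mathcal{W}\cup\mathcal{A}$ has more than one element, then there do not exist a separable metric space $\mathcal{Z}$, a continuous bijection $g:\mathcal{Z}\to\mathcal{Z}$ with continuous inverse such that $z_{k+1}=g(z_k)$ and its time reversal $z_{k+1}=g^{-1}(z_k)$ both have closed basins (e.g., an invertible linear system), and a continuous one-to-one map $F:\mathcal{X}\to\mathcal{Z}$ with $F\circ f=g\circ F$ on $\mathcal{X}$.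
   Context: Forward orbit of $\xi$: $\{f^k(\xi)\mid k\in\mathbb{N}\}$; backward orbit: $\{f^{-k}(\xi)\mid k\in\mathbb{N}\}$. A set $S\subseteq\mathcal{X}$ is precompact if its closure in $\mathcal{X}$ is compact; a trajectory is forward (backward) precompact if its forward (backward) orbit is precompact. $\omega_{\mathcal{X}}(\xi)$ is the set of $x\in\mathcal{X}$ with $f^{k_j}(\xi)\to x$ for some $k_j\to\infty$; $\alpha_{\mathcal{X}}(\xi)$ likewise with $f^{-k_j}$. $\mathcal{W}=\{\omega_{\mathcal{X}}(\xi)\mid\xi\in\mathcal{X}\}$, $\mathcal{A}=\{\alpha_{\mathcal{X}}(\xi)\mid\xi\in\mathcal{X}\}$, $D^+_{\mathcal{X}}(\Omega)=\{\xi\in\mathcal{X}\mid\omega_{\mathcal{X}}(\xi)=\Omega\}$, $D^-_{\mathcal{X}}(\Gamma)=\{\xi\in\mathcal{X}\mid\alpha_{\mathcal{X}}(\xi)=\Gamma\}$. A system has closed basins if the domain of attraction of each of its $\omega$-limit sets is closed (for a time reversal: each domain of repulsion of each $\alpha$-limit set of the original system is closed). Same notions on $\mathcal{Z}$ for $g$. *)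

theory Defs
  imports "HOL-Analysis.Analysis"
begin

text \<open>Discrete-time system x_{k+1} = h x_k considered on a state set S.
  Backward dynamics are obtained by passing the inverse map as h.\<close>

definition orbit :: "('a \<Rightarrow> 'a) \<Rightarrow> 'a \<Rightarrow> 'a set" where
  "orbit h \<xi> = {(h ^^ k) \<xi> | k. True}"

definition precompact_in :: "'a::metric_space set \<Rightarrow> 'a set \<Rightarrow> bool" where
  "precompact_in S T \<longleftrightarrow> T \<subseteq> S \<and> compact (S \<inter> closure T)"

definition limit_set :: "'a::metric_space set \<Rightarrow> ('a \<Rightarrow> 'a) \<Rightarrow> 'a \<Rightarrow> 'a set" where
  "limit_set S h \<xi> = {x \<in> S. \<exists>kk :: nat \<Rightarrow> nat.
      filterlim kk at_top sequentially \<and> (\<lambda>j. (h ^^ kk j) \<xi>) \<longlonglongrightarrow> x}"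

text \<open>Set of all limit sets (the set W for h = f, the set A for h = f^{-1}).\<close>
definition limit_sets :: "'a::metric_space set \<Rightarrow> ('a \<Rightarrow> 'a) \<Rightarrow> 'a set set" where
  "limit_sets S h = limit_set S h ` S"

definition basin :: "'a::metric_space set \<Rightarrow> ('a \<Rightarrow> 'a) \<Rightarrow> 'a set \<Rightarrow> 'a set" where
  "basin S h \<Omega> = {\<xi> \<in> S. limit_set S h \<xi> = \<Omega>}"

definition closed_basins :: "'a::metric_space set \<Rightarrow> ('a \<Rightarrow> 'a) \<Rightarrow> bool" where
  "closed_basins S h \<longleftrightarrow> (\<forall>\<Omega> \<in> limit_sets S h. closedin (top_of_set S) (basin S h \<Omega>))"

end

theory Submission
  imports Defs
begin

lemma limit_set_iff:
  "x \<in> limit_set S h \<xi> \<longleftrightarrow> x \<in> S \<and> (\<forall>e>0. \<forall>N. \<exists>k\<ge>N. dist ((h^^k) \<xi>) x < e)"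
proof
  assume "x \<in> limit_set S h \<xi>"
  then obtain kk :: "nat \<Rightarrow> nat" where x: "x \<in> S" and kk: "filterlim kk at_top sequentially"
    and lim: "(\<lambda>j. (h ^^ kk j) \<xi>) \<longlonglongrightarrow> x" unfolding limit_set_def by blast
  show "x \<in> S \<and> (\<forall>e>0. \<forall>N. \<exists>k\<ge>N. dist ((h^^k) \<xi>) x < e)"
  proof (intro conjI allI impI x)
    fix e :: real and N assume e: "e > 0"
    have "eventually (\<lambda>j. dist ((h ^^ kk j) \<xi>) x < e) sequentially"
      using lim e by (simp add: tendsto_iff)
    moreover have "eventually (\<lambda>j. kk j \<ge> N) sequentially"
      using kk by (simp add: filterlim_at_top)
    ultimately have "eventually (\<lambda>j. kk j \<ge> N \<and> dist ((h ^^ kk j) \<xi>) x < e) sequentially"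
      by (simp add: eventually_conj)
    then obtain j where "kk j \<ge> N \<and> dist ((h ^^ kk j) \<xi>) x < e"
      using eventually_sequentially by auto
    then show "\<exists>k\<ge>N. dist ((h^^k) \<xi>) x < e" by blast
  qed
next
  assume R: "x \<in> S \<and> (\<forall>e>0. \<forall>N. \<exists>k\<ge>N. dist ((h^^k) \<xi>) x < e)"
  define nxt where "nxt = (\<lambda>j N. SOME k. k \<ge> N \<and> dist ((h^^k) \<xi>) x < 1 / (real j + 1))"
  have nxt: "nxt j N \<ge> N \<and> dist ((h^^(nxt j N)) \<xi>) x < 1 / (real j + 1)" for j N
  proof -
    have "\<exists>k\<ge>N. dist ((h^^k) \<xi>) x < 1 / (real j + 1)" using R by simp
    then show ?thesis unfolding nxt_def by (rule someI_ex)
  qed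
  define kk where "kk = rec_nat (nxt 0 0) (\<lambda>j k. nxt (Suc j) (Suc k))"
  have kk0: "kk 0 = nxt 0 0" and kkS: "kk (Suc j) = nxt (Suc j) (Suc (kk j))" for j
    by (simp_all add: kk_def)
  have sm: "strict_mono kk"
    unfolding strict_mono_Suc_iff using nxt kkS by (metis Suc_le_lessD)
  have d: "dist ((h^^(kk j)) \<xi>) x < 1 / (real j + 1)" for j
  proof (cases j)
    case 0 then show ?thesis using nxt[of 0 0] kk0 by simp
  next
    case (Suc i) then show ?thesis using nxt[where j="Suc i" and N="Suc (kk i)"] kkS[of i] by simp
  qed
  have lim: "(\<lambda>j. (h ^^ kk j) \<xi>) \<longlonglongrightarrow> x"
    unfolding lim_sequentially
  proof (intro allI impI)
    fix r :: real assume "r > 0"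
    then obtain n where n: "inverse (real (Suc n)) < r" using reals_Archimedean by blast
    show "\<exists>no. \<forall>j\<ge>no. dist ((h ^^ kk j) \<xi>) x < r"
    proof (intro exI allI impI)
      fix j assume "j \<ge> n"
      then have "1 / (real j + 1) \<le> inverse (real (Suc n))"
        by (simp add: field_simps)
      then show "dist ((h ^^ kk j) \<xi>) x < r" using d[of j] n by linarith
    qed
  qed
  show "x \<in> limit_set S h \<xi>"
    unfolding limit_set_def using R sm lim filterlim_subseq by blast
qed


lemma limit_set_shift: "limit_set S h (h \<xi>) = limit_set S h \<xi>"
proof (intro set_eqI iffI)
  fix x assume B: "x \<in> limit_set S h (h \<xi>)"
  show "x \<in> limit_set S h \<xi>" unfolding limit_set_iff
  proof (intro conjI allI impI)
    show "x \<in> S" using B limit_set_iff by blast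
    fix e :: real and N assume "e > 0"
    then obtain k where k: "k \<ge> N" "dist ((h^^k) (h \<xi>)) x < e" using B limit_set_iff by blast
    have "(h^^k) (h \<xi>) = (h^^(Suc k)) \<xi>" by (simp only: funpow_Suc_right o_apply)
    then show "\<exists>k\<ge>N. dist ((h^^k) \<xi>) x < e" using k by (intro exI[of _ "Suc k"]) auto
  qed
next
  fix x assume A: "x \<in> limit_set S h \<xi>"
  show "x \<in> limit_set S h (h \<xi>)" unfolding limit_set_iff
  proof (intro conjI allI impI)
    show "x \<in> S" using A limit_set_iff by blast
    fix e :: real and N assume "e > 0"
    then obtain k where k: "k \<ge> Suc N" "dist ((h^^k) \<xi>) x < e" using A limit_set_iff by blast
    then obtain i where i: "k = Suc i" by (cases k) auto
    have "(h^^i) (h \<xi>) = (h^^k) \<xi>" by (simp only: i funpow_Suc_right o_apply)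
    then show "\<exists>k\<ge>N. dist ((h^^k) (h \<xi>)) x < e" using k i by (intro exI[of _ i]) auto
  qed
qed

lemma limit_set_shift_iter: "limit_set S h ((h^^n) \<xi>) = limit_set S h \<xi>"
  by (induction n) (simp_all add: limit_set_shift)

lemma hom_iter_in: "homeomorphism M M h h' \<Longrightarrow> w \<in> M \<Longrightarrow> (h^^k) w \<in> M"
  by (induction k) (auto simp: homeomorphism_def)

lemma hom_iter_cont: "homeomorphism M M h h' \<Longrightarrow> continuous_on M (h^^k)"
proof (induction k)
  case 0 then show ?case by (simp add: continuous_on_id)
  next
  case (Suc k)
  have "continuous_on M (h \<circ> (h^^k))"
  proof (rule continuous_on_compose)
    show "continuous_on M (h^^k)" using Suc by simp
    have "(h^^k) ` M \<subseteq> M" using hom_iter_in[OF Suc.prems] by blast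
    then show "continuous_on ((h^^k) ` M) h"
      using Suc.prems by (meson continuous_on_subset homeomorphism_def)
  qed
  then show ?case by simp
qed

lemma hom_back0: "homeomorphism M M h h' \<Longrightarrow> w \<in> M \<Longrightarrow> (h'^^m) ((h^^m) w) = w"
proof (induction m arbitrary: w)
  case 0 then show ?case by simp
next
  case (Suc m)
  have "(h^^m) w \<in> M" using hom_iter_in Suc.prems by blast
  then have "h' (h ((h^^m) w)) = (h^^m) w" using Suc.prems(1) by (simp add: homeomorphism_def)
  moreover have "(h'^^Suc m) z = (h'^^m) (h' z)" for z by (simp only: funpow_Suc_right o_apply)
  moreover have "(h^^Suc m) w = h ((h^^m) w)" by simp
  ultimately show ?case using Suc by simp
qed

lemma hom_back: "homeomorphism M M h h' \<Longrightarrow> w \<in> M \<Longrightarrow> m \<le> k \<Longrightarrow> (h'^^m) ((h^^k) w) = (h^^(k-m)) w"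
proof -
  assume a: "homeomorphism M M h h'" "w \<in> M" "m \<le> k"
  have "(h^^k) w = (h^^m) ((h^^(k-m)) w)" using a(3)
    by (metis funpow_add le_add_diff_inverse o_apply)
  then show ?thesis using hom_back0[OF a(1) hom_iter_in[OF a(1,2)]] by simp
qed

lemma near_iter:
  assumes hom: "homeomorphism M M h h'" and xi: "\<xi> \<in> M" and y: "y \<in> M"
    and yl: "y \<in> limit_set X h \<xi>" and e: "e > 0"
  shows "\<exists>k\<ge>N. dist ((h^^k) \<xi>) ((h^^m) y) < e"
    and "\<exists>k\<ge>N. dist ((h^^k) \<xi>) ((h'^^m) y) < e"
proof -
  have hom': "homeomorphism M M h' h" using hom homeomorphism_sym by blast
  obtain d where d: "d > 0" "\<forall>x'\<in>M. dist x' y < d \<longrightarrow> dist ((h^^m) x') ((h^^m) y) < e"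
    using hom_iter_cont[OF hom, of m] y e unfolding continuous_on_iff by blast
  obtain k where k: "k \<ge> N" "dist ((h^^k) \<xi>) y < d" using yl d(1) limit_set_iff by blast
  have "dist ((h^^m) ((h^^k) \<xi>)) ((h^^m) y) < e" using d k hom_iter_in[OF hom xi] by blast
  then have "dist ((h^^(m+k)) \<xi>) ((h^^m) y) < e" by (simp add: funpow_add)
  then show "\<exists>k\<ge>N. dist ((h^^k) \<xi>) ((h^^m) y) < e" using k(1) by (intro exI[of _ "m+k"]) auto
  obtain d' where d': "d' > 0" "\<forall>x'\<in>M. dist x' y < d' \<longrightarrow> dist ((h'^^m) x') ((h'^^m) y) < e"
    using hom_iter_cont[OF hom', of m] y e unfolding continuous_on_iff by blast
  obtain k' where k': "k' \<ge> N + m" "dist ((h^^k') \<xi>) y < d'" using yl d'(1) limit_set_iff by blast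
  have "dist ((h'^^m) ((h^^k') \<xi>)) ((h'^^m) y) < e" using d' k' hom_iter_in[OF hom xi] by blast
  then have "dist ((h^^(k'-m)) \<xi>) ((h'^^m) y) < e" using hom_back[OF hom xi, of m k'] k'(1) by simp
  then show "\<exists>k\<ge>N. dist ((h^^k) \<xi>) ((h'^^m) y) < e" using k'(1) by (intro exI[of _ "k'-m"]) auto
qed

lemma precomp_closure:
  assumes "precompact_in X T" shows "closure T \<subseteq> X" "compact (closure T)"
proof -
  have T: "T \<subseteq> X" and c: "compact (X \<inter> closure T)" using assms unfolding precompact_in_def by auto
  have "T \<subseteq> X \<inter> closure T" using T closure_subset by blast
  then have "closure T \<subseteq> X \<inter> closure T"
    using c by (rule closure_minimal[OF _ compact_imp_closed])
  then show "closure T \<subseteq> X" by blast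
  then show "compact (closure T)" using c by (simp add: Int_absorb1)
qed

lemma precomp_sub:
  assumes "precompact_in X T" "S \<subseteq> closure T" shows "precompact_in X S"
proof -
  have "closure S \<subseteq> closure T" using assms(2) by (metis closure_closure closure_mono)
  moreover have "compact (closure T \<inter> closure S)"
    using precomp_closure(2)[OF assms(1)] by (simp add: compact_Int_closed)
  moreover have "S \<subseteq> X" using assms(2) precomp_closure(1)[OF assms(1)] by blast
  ultimately show ?thesis using precomp_closure(1)[OF assms(1)]
    unfolding precompact_in_def by (metis Int_absorb1 Int_absorb2 order_trans)
qed

lemma orbit_iff: "x \<in> orbit h \<xi> \<longleftrightarrow> (\<exists>k. x = (h^^k) \<xi>)"
  unfolding orbit_def by auto

lemma limit_point_precomp:
  assumes hom: "homeomorphism M M h h'" and XM: "X \<subseteq> M"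
    and pc: "precompact_in X (orbit h \<xi>)" and yl: "y \<in> limit_set X h \<xi>"
  shows "precompact_in X (orbit h y)" "precompact_in X (orbit h' y)"
proof -
  have "\<xi> \<in> orbit h \<xi>" by (auto simp: orbit_iff intro: exI[of _ 0])
  then have xi: "\<xi> \<in> X" using pc unfolding precompact_in_def by blast
  have y: "y \<in> M" using yl XM unfolding limit_set_def by blast
  have xiM: "\<xi> \<in> M" using xi XM by blast
  have "(h^^m) y \<in> closure (orbit h \<xi>)" for m
    unfolding closure_approachable
  proof (intro allI impI)
    fix e :: real assume "e > 0"
    then obtain k where "dist ((h^^k) \<xi>) ((h^^m) y) < e" using near_iter(1)[OF hom xiM y yl] by blast
    moreover have "(h^^k) \<xi> \<in> orbit h \<xi>" by (auto simp: orbit_iff)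
    ultimately show "\<exists>z\<in>orbit h \<xi>. dist z ((h^^m) y) < e" by blast
  qed
  then have "orbit h y \<subseteq> closure (orbit h \<xi>)" by (auto simp: orbit_def)
  then show "precompact_in X (orbit h y)" using precomp_sub[OF pc] by blast
  have "(h'^^m) y \<in> closure (orbit h \<xi>)" for m
    unfolding closure_approachable
  proof (intro allI impI)
    fix e :: real assume "e > 0"
    then obtain k where "dist ((h^^k) \<xi>) ((h'^^m) y) < e" using near_iter(2)[OF hom xiM y yl] by blast
    moreover have "(h^^k) \<xi> \<in> orbit h \<xi>" by (auto simp: orbit_iff)
    ultimately show "\<exists>z\<in>orbit h \<xi>. dist z ((h'^^m) y) < e" by blast
  qed
  then have "orbit h' y \<subseteq> closure (orbit h \<xi>)" by (auto simp: orbit_def)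
  then show "precompact_in X (orbit h' y)" using precomp_sub[OF pc] by blast
qed

lemma limit_set_nonempty:
  assumes pc: "precompact_in X (orbit h \<xi>)" shows "limit_set X h \<xi> \<noteq> {}"
proof -
  have "\<forall>n. (h^^n) \<xi> \<in> closure (orbit h \<xi>)"
  proof
    fix n have "(h^^n) \<xi> \<in> orbit h \<xi>" by (auto simp: orbit_iff)
    then show "(h^^n) \<xi> \<in> closure (orbit h \<xi>)" using closure_subset by blast
  qed
  then obtain l r where l: "l \<in> closure (orbit h \<xi>)" "strict_mono (r :: nat \<Rightarrow> nat)"
    "((\<lambda>n. (h^^n) \<xi>) \<circ> r) \<longlonglongrightarrow> l"
    by (rule seq_compactE[OF compact_imp_seq_compact[OF precomp_closure(2)[OF pc]]])
  have "l \<in> limit_set X h \<xi>" unfolding limit_set_def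
    using l precomp_closure(1)[OF pc] filterlim_subseq[OF l(2)] by (auto simp: o_def)
  then show ?thesis by blast
qed

lemma limit_sub:
  assumes hom: "homeomorphism M M h h'" and XM: "X \<subseteq> M" and xi: "\<xi> \<in> M"
    and yl: "y \<in> limit_set X h \<xi>"
  shows "limit_set X h' y \<subseteq> limit_set X h \<xi>"
proof
  fix x assume x: "x \<in> limit_set X h' y"
  have y: "y \<in> M" using yl XM unfolding limit_set_def by blast
  show "x \<in> limit_set X h \<xi>" unfolding limit_set_iff
  proof (intro conjI allI impI)
    show "x \<in> X" using x unfolding limit_set_def by blast
    fix e :: real and N assume e: "e > 0"
    have "e/2 > 0" using e by simp
    then obtain m where m: "dist ((h'^^m) y) x < e/2" using x limit_set_iff by blast
    obtain k where k: "k \<ge> N" "dist ((h^^k) \<xi>) ((h'^^m) y) < e/2"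
      using near_iter(2)[OF hom xi y yl, of "e/2" N m] e by auto
    have "dist ((h^^k) \<xi>) x < e" using m k(2) dist_triangle[of "(h^^k) \<xi>" x "(h'^^m) y"] by linarith
    then show "\<exists>k\<ge>N. dist ((h^^k) \<xi>) x < e" using k(1) by blast
  qed
qed


lemma limit_transfer:
  assumes pc: "precompact_in X (orbit h \<xi>)" and cF: "continuous_on X F" and FZ: "F ` X \<subseteq> Z"
    and comm: "\<And>k. F ((h^^k) \<xi>) = (hz^^k) (F \<xi>)"
  shows "limit_set Z hz (F \<xi>) = F ` limit_set X h \<xi>"
proof (intro set_eqI iffI)
  have orbX: "(h^^k) \<xi> \<in> X" for k
  proof -
    have "(h^^k) \<xi> \<in> orbit h \<xi>" by (auto simp: orbit_iff)
    then show ?thesis using pc unfolding precompact_in_def by blast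
  qed
  {
    fix z assume "z \<in> limit_set Z hz (F \<xi>)"
    then obtain kk :: "nat \<Rightarrow> nat" where z: "z \<in> Z" and kk: "filterlim kk at_top sequentially"
      and lim: "(\<lambda>j. (hz ^^ kk j) (F \<xi>)) \<longlonglongrightarrow> z" unfolding limit_set_def by blast
    have "\<forall>n. (h^^(kk n)) \<xi> \<in> closure (orbit h \<xi>)"
    proof
      fix n have "(h^^(kk n)) \<xi> \<in> orbit h \<xi>" by (auto simp: orbit_iff)
      then show "(h^^(kk n)) \<xi> \<in> closure (orbit h \<xi>)" using closure_subset by blast
    qed
    then obtain l r where l: "l \<in> closure (orbit h \<xi>)" "strict_mono (r :: nat \<Rightarrow> nat)"
      "((\<lambda>n. (h^^(kk n)) \<xi>) \<circ> r) \<longlonglongrightarrow> l"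
      by (rule seq_compactE[OF compact_imp_seq_compact[OF precomp_closure(2)[OF pc]]])
    have lX: "l \<in> X" using l(1) precomp_closure(1)[OF pc] by blast
    have kkr: "filterlim (kk \<circ> r) at_top sequentially"
      using filterlim_compose[OF kk filterlim_subseq[OF l(2)]] by (simp add: o_def)
    have "l \<in> limit_set X h \<xi>" unfolding limit_set_def
      using lX kkr l(3) by (auto simp: o_def)
    have "((\<lambda>n. F ((h^^(kk (r n))) \<xi>)) \<longlonglongrightarrow> F l)"
      using continuous_on_tendsto_compose[OF cF l(3)[unfolded o_def] lX] orbX by simp
    then have "((\<lambda>n. (hz^^(kk (r n))) (F \<xi>)) \<longlonglongrightarrow> F l)" using comm by simp
    moreover have "((\<lambda>n. (hz^^(kk (r n))) (F \<xi>)) \<longlonglongrightarrow> z)"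
      using LIMSEQ_subseq_LIMSEQ[OF lim l(2)] by (simp add: o_def)
    ultimately have "z = F l" using LIMSEQ_unique by blast
    then show "z \<in> F ` limit_set X h \<xi>" using \<open>l \<in> limit_set X h \<xi>\<close> by blast
  }
  {
    fix z assume "z \<in> F ` limit_set X h \<xi>"
    then obtain x where zx: "z = F x" and "x \<in> limit_set X h \<xi>" by blast
    then obtain kk :: "nat \<Rightarrow> nat" where x: "x \<in> X" and kk: "filterlim kk at_top sequentially"
      and lim: "(\<lambda>j. (h ^^ kk j) \<xi>) \<longlonglongrightarrow> x" unfolding limit_set_def by blast
    have "((\<lambda>n. F ((h^^(kk n)) \<xi>)) \<longlonglongrightarrow> F x)"
      using continuous_on_tendsto_compose[OF cF lim x] orbX by simp
    then have "((\<lambda>n. (hz^^(kk n)) (F \<xi>)) \<longlonglongrightarrow> F x)" using comm by simp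
    then show "z \<in> limit_set Z hz (F \<xi>)" unfolding limit_set_def
      using zx x FZ kk by blast
  }
qed

lemma path_connected_const:
  fixes X :: "'a::metric_space set"
  assumes pc: "path_connected X" and cnt: "countable (L ` X)"
    and cl: "\<And>x. x \<in> X \<Longrightarrow> closedin (top_of_set X) {y\<in>X. L y = L x}"
    and a: "a \<in> X" and b: "b \<in> X"
  shows "L a = L b"
proof -
  obtain \<gamma> where \<gamma>: "path \<gamma>" "path_image \<gamma> \<subseteq> X" "pathstart \<gamma> = a" "pathfinish \<gamma> = b"
    using pc a b unfolding path_connected_def by blast
  have cg: "continuous_on {0..1} \<gamma>" using \<gamma>(1) unfolding path_def by simp
  have gX: "t \<in> {0..1} \<Longrightarrow> \<gamma> t \<in> X" for t using \<gamma>(2) unfolding path_image_def by blast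
  define P where "P v = {t\<in>{0..1::real}. L (\<gamma> t) = v}" for v
  define U where "U = P ` (L ` X) - {{}}"
  have clP: "closed (P v)" if v: "v \<in> L ` X" for v
  proof -
    obtain x where x: "x \<in> X" "v = L x" using v by blast
    obtain T where T: "closed T" "{y\<in>X. L y = L x} = X \<inter> T" using cl[OF x(1)] closedin_closed by metis
    have "P v = {0..1} \<inter> \<gamma> -` T"
      using T(2) gX x(2) unfolding P_def by blast
    then have "closedin (top_of_set {0..1}) (P v)"
      using continuous_closedin_preimage[OF cg T(1)] by simp
    then show ?thesis using closedin_closed_trans by blast
  qed
  have "U = {{0..1}}"
  proof (rule real_Sierpinski_lemma)
    show "(0::real) \<le> 1" by simp
    show "countable U" unfolding U_def using cnt by simp
    show "pairwise disjnt U" unfolding U_def pairwise_def disjnt_def P_def by auto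
    show "\<And>C. C \<in> U \<Longrightarrow> closed C \<and> C \<noteq> {}" unfolding U_def using clP by blast
    show "\<Union> U = {0..1}"
    proof
      show "\<Union> U \<subseteq> {0..1}" unfolding U_def P_def by auto
      show "{0..1} \<subseteq> \<Union> U"
      proof
        fix t :: real assume t: "t \<in> {0..1}"
        then have "t \<in> P (L (\<gamma> t))" "L (\<gamma> t) \<in> L ` X" using gX unfolding P_def by auto
        then have "P (L (\<gamma> t)) \<in> U" "t \<in> P (L (\<gamma> t))" unfolding U_def by auto
        then show "t \<in> \<Union> U" by blast
      qed
    qed
  qed
  moreover have "P (L a) \<in> U"
  proof -
    have "(0::real) \<in> P (L a)" unfolding P_def using \<gamma>(3) by (auto simp: pathstart_def)
    then show ?thesis unfolding U_def using a by blast
  qed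
  ultimately have "P (L a) = {0..1}" by blast
  then have "(1::real) \<in> P (L a)" by simp
  then show ?thesis using \<gamma>(4) unfolding P_def pathfinish_def by simp
qed


lemma fiber_closed:
  assumes cb: "closed_basins Z h" and cF: "continuous_on X F" and FZ: "F ` X \<subseteq> Z" and x: "x \<in> X"
  shows "closedin (top_of_set X) {y\<in>X. limit_set Z h (F y) = limit_set Z h (F x)}"
proof -
  have "limit_set Z h (F x) \<in> limit_sets Z h" unfolding limit_sets_def using FZ x by blast
  then have "closedin (top_of_set Z) (basin Z h (limit_set Z h (F x)))"
    using cb unfolding closed_basins_def by blast
  then obtain T where T: "closed T" "basin Z h (limit_set Z h (F x)) = Z \<inter> T"
    using closedin_closed by metis
  have "{y\<in>X. limit_set Z h (F y) = limit_set Z h (F x)} = X \<inter> F -` T"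
  proof (intro set_eqI iffI)
    fix y assume "y \<in> {y\<in>X. limit_set Z h (F y) = limit_set Z h (F x)}"
    then have "y \<in> X" "F y \<in> basin Z h (limit_set Z h (F x))" using FZ unfolding basin_def by auto
    then show "y \<in> X \<inter> F -` T" using T(2) by blast
  next
    fix y assume "y \<in> X \<inter> F -` T"
    then have "y \<in> X" "F y \<in> basin Z h (limit_set Z h (F x))" using FZ T(2) by auto
    then show "y \<in> {y\<in>X. limit_set Z h (F y) = limit_set Z h (F x)}" unfolding basin_def by auto
  qed
  then show ?thesis using continuous_closedin_preimage[OF cF T(1)] by simp
qed

lemma closedin_seq:
  assumes "closedin (top_of_set X) E" "\<And>n. s n \<in> E" "s \<longlonglongrightarrow> l" "l \<in> X"
  shows "l \<in> E"
proof -
  obtain T where T: "closed T" "E = X \<inter> T" using assms(1) closedin_closed by metis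
  have "l \<in> T" using closed_sequentially[OF T(1)] assms(2,3) T(2) by blast
  then show ?thesis using T(2) assms(4) by blast
qed

theorem corollary19:
  fixes M X :: "'a::metric_space set" and f fi :: "'a \<Rightarrow> 'a"
  assumes sepM: "separable_space (top_of_set M)"
    and homf: "homeomorphism M M f fi"
    and XM: "X \<subseteq> M" and Xinv: "f ` X \<subseteq> X" and Xpc: "path_connected X"
    and precomp: "\<forall>\<xi>\<in>X. precompact_in X (orbit f \<xi>) \<or> precompact_in X (orbit fi \<xi>)"
    and count: "countable (limit_sets X f \<union> limit_sets X fi)"
    and fwd: "\<forall>\<Omega>\<in>limit_sets X f. \<exists>\<xi>\<in>basin X f \<Omega>. precompact_in X (orbit f \<xi>)"
    and bwd: "\<forall>\<Gamma>\<in>limit_sets X fi. \<exists>\<xi>\<in>basin X fi \<Gamma>. precompact_in X (orbit fi \<xi>)"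
    and two: "\<exists>S1 S2. S1 \<in> limit_sets X f \<union> limit_sets X fi
                    \<and> S2 \<in> limit_sets X f \<union> limit_sets X fi \<and> S1 \<noteq> S2"
  shows "\<not> (\<exists>(Z :: 'z::metric_space set) g gi (F :: 'a \<Rightarrow> 'z).
            separable_space (top_of_set Z) \<and> homeomorphism Z Z g gi
            \<and> closed_basins Z g \<and> closed_basins Z gi
            \<and> continuous_on X F \<and> inj_on F X \<and> F ` X \<subseteq> Z
            \<and> (\<forall>x\<in>X. F (f x) = g (F x)))"
proof
  assume "\<exists>(Z :: 'z::metric_space set) g gi (F :: 'a \<Rightarrow> 'z).
            separable_space (top_of_set Z) \<and> homeomorphism Z Z g gi
            \<and> closed_basins Z g \<and> closed_basins Z gi
            \<and> continuous_on X F \<and> inj_on F X \<and> F ` X \<subseteq> Z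
            \<and> (\<forall>x\<in>X. F (f x) = g (F x))"
  then obtain Z :: "'z::metric_space set" and g gi and F :: "'a \<Rightarrow> 'z" where
    homg: "homeomorphism Z Z g gi" and cbg: "closed_basins Z g" and cbgi: "closed_basins Z gi"
    and cF: "continuous_on X F" and injF: "inj_on F X" and FZ: "F ` X \<subseteq> Z"
    and comm: "\<forall>x\<in>X. F (f x) = g (F x)"
    by blast
  have homf': "homeomorphism M M fi f" using homf homeomorphism_sym by blast
  have gZ: "z \<in> Z \<Longrightarrow> g z \<in> Z" for z using homg unfolding homeomorphism_def by blast
  have gig: "z \<in> Z \<Longrightarrow> gi (g z) = z" for z using homg unfolding homeomorphism_def by blast
  have ffi: "y \<in> M \<Longrightarrow> f (fi y) = y" for y using homf unfolding homeomorphism_def by blast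
  have fX: "\<xi> \<in> X \<Longrightarrow> (f^^k) \<xi> \<in> X" for \<xi> k
    by (induction k) (use Xinv in auto)
  have F1: "\<xi> \<in> X \<Longrightarrow> F ((f^^k) \<xi>) = (g^^k) (F \<xi>)" for \<xi> k
    by (induction k) (use comm fX in auto)
  have F2: "orbit fi \<xi> \<subseteq> X \<Longrightarrow> F ((fi^^k) \<xi>) = (gi^^k) (F \<xi>)" for \<xi> k
  proof (induction k)
    case 0 then show ?case by simp
  next
    case (Suc k)
    define w where "w = (fi^^k) \<xi>"
    have "fi w = (fi^^(Suc k)) \<xi>" unfolding w_def by simp
    then have "fi w \<in> orbit fi \<xi>" unfolding orbit_iff by blast
    then have wX: "fi w \<in> X" using Suc.prems by blast
    have "w \<in> orbit fi \<xi>" unfolding w_def orbit_iff by blast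
    then have "w \<in> X" using Suc.prems by blast
    then have "F (f (fi w)) = g (F (fi w))" "f (fi w) = w" using comm wX XM ffi by auto
    then have "F w = g (F (fi w))" by simp
    then have "gi (F w) = F (fi w)" using gig wX FZ by auto
    then show ?case using Suc by (simp add: w_def)
  qed
  have gZk: "z \<in> Z \<Longrightarrow> (g^^k) z \<in> Z" for z k by (induction k) (use gZ in auto)
  have omZ_inv: "limit_set Z g ((g^^k) z) = limit_set Z g z" for z k
    by (rule limit_set_shift_iter)
  have alZ_inv1: "z \<in> Z \<Longrightarrow> limit_set Z gi (g z) = limit_set Z gi z" for z
    using limit_set_shift[of Z gi "g z"] gig by simp
  have alZ_inv: "z \<in> Z \<Longrightarrow> limit_set Z gi ((g^^k) z) = limit_set Z gi z" for z k
    by (induction k) (use alZ_inv1 gZk in auto)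
  have cntW: "countable (limit_sets X f)" and cntA: "countable (limit_sets X fi)" using count by auto
  have key: "\<exists>y\<in>X. precompact_in X (orbit f y) \<and> precompact_in X (orbit fi y)
      \<and> limit_set Z g (F \<xi>) = limit_set Z g (F y) \<and> limit_set Z gi (F \<xi>) = limit_set Z gi (F y)"
    if xi: "\<xi> \<in> X" for \<xi>
  proof -
    have "limit_set X f \<xi> \<in> limit_sets X f" unfolding limit_sets_def using xi by blast
    then obtain \<xi>0 where b0: "\<xi>0 \<in> basin X f (limit_set X f \<xi>)" and pc0: "precompact_in X (orbit f \<xi>0)"
      using fwd by blast
    have x0: "\<xi>0 \<in> X" "limit_set X f \<xi>0 = limit_set X f \<xi>" using b0 unfolding basin_def by auto
    obtain y where y0: "y \<in> limit_set X f \<xi>0" using limit_set_nonempty[OF pc0] by blast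
    then have "y \<in> limit_set X f \<xi>" using x0 by simp
    then obtain kk :: "nat \<Rightarrow> nat" where yX: "y \<in> X"
      and lim: "(\<lambda>j. (f ^^ kk j) \<xi>) \<longlonglongrightarrow> y" unfolding limit_set_def by blast
    have FxiZ: "F \<xi> \<in> Z" using FZ xi by blast
    have "y \<in> {x\<in>X. limit_set Z g (F x) = limit_set Z g (F \<xi>)}"
    proof (rule closedin_seq[OF fiber_closed[OF cbg cF FZ xi] _ lim yX])
      fix n show "(f ^^ kk n) \<xi> \<in> {x\<in>X. limit_set Z g (F x) = limit_set Z g (F \<xi>)}"
        using fX[OF xi] F1[OF xi] omZ_inv by simp
    qed
    moreover have "y \<in> {x\<in>X. limit_set Z gi (F x) = limit_set Z gi (F \<xi>)}"
    proof (rule closedin_seq[OF fiber_closed[OF cbgi cF FZ xi] _ lim yX])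
      fix n show "(f ^^ kk n) \<xi> \<in> {x\<in>X. limit_set Z gi (F x) = limit_set Z gi (F \<xi>)}"
        using fX[OF xi] F1[OF xi] alZ_inv[OF FxiZ] by simp
    qed
    moreover have "precompact_in X (orbit f y)" "precompact_in X (orbit fi y)"
      using limit_point_precomp[OF homf XM pc0 y0] by auto
    ultimately show ?thesis using yX by auto
  qed
  have trW: "precompact_in X (orbit f y) \<Longrightarrow> limit_set Z g (F y) = F ` limit_set X f y" for y
  proof -
    assume pc: "precompact_in X (orbit f y)"
    have "y \<in> orbit f y" by (auto simp: orbit_iff intro: exI[of _ 0])
    then have "y \<in> X" using pc unfolding precompact_in_def by blast
    then show ?thesis using limit_transfer[OF pc cF FZ] F1 by blast
  qed
  have trA: "precompact_in X (orbit fi y) \<Longrightarrow> limit_set Z gi (F y) = F ` limit_set X fi y" for y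
  proof -
    assume pc: "precompact_in X (orbit fi y)"
    then have "orbit fi y \<subseteq> X" unfolding precompact_in_def by blast
    then show ?thesis using limit_transfer[OF pc cF FZ] F2 by blast
  qed
  have constW: "limit_set Z g (F a) = limit_set Z g (F b)" if "a \<in> X" "b \<in> X" for a b
  proof (rule path_connected_const[OF Xpc _ _ that])
    show "countable ((\<lambda>x. limit_set Z g (F x)) ` X)"
    proof (rule countable_subset[OF _ countable_image[OF cntW, of "\<lambda>S. F ` S"]])
      show "(\<lambda>x. limit_set Z g (F x)) ` X \<subseteq> (\<lambda>S. F ` S) ` limit_sets X f"
      proof
        fix v assume "v \<in> (\<lambda>x. limit_set Z g (F x)) ` X"
        then obtain \<xi> where xi: "\<xi> \<in> X" "v = limit_set Z g (F \<xi>)" by blast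
        obtain y where y: "y \<in> X" "precompact_in X (orbit f y)" "limit_set Z g (F \<xi>) = limit_set Z g (F y)"
          using key[OF xi(1)] by blast
        have "v = F ` limit_set X f y" using xi(2) y(3) trW[OF y(2)] by simp
        moreover have "limit_set X f y \<in> limit_sets X f" unfolding limit_sets_def using y(1) by blast
        ultimately show "v \<in> (\<lambda>S. F ` S) ` limit_sets X f" by blast
      qed
    qed
    show "\<And>x. x \<in> X \<Longrightarrow> closedin (top_of_set X) {y \<in> X. limit_set Z g (F y) = limit_set Z g (F x)}"
      using fiber_closed[OF cbg cF FZ] by blast
  qed
  have constA: "limit_set Z gi (F a) = limit_set Z gi (F b)" if "a \<in> X" "b \<in> X" for a b
  proof (rule path_connected_const[OF Xpc _ _ that])
    show "countable ((\<lambda>x. limit_set Z gi (F x)) ` X)"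
    proof (rule countable_subset[OF _ countable_image[OF cntA, of "\<lambda>S. F ` S"]])
      show "(\<lambda>x. limit_set Z gi (F x)) ` X \<subseteq> (\<lambda>S. F ` S) ` limit_sets X fi"
      proof
        fix v assume "v \<in> (\<lambda>x. limit_set Z gi (F x)) ` X"
        then obtain \<xi> where xi: "\<xi> \<in> X" "v = limit_set Z gi (F \<xi>)" by blast
        obtain y where y: "y \<in> X" "precompact_in X (orbit fi y)" "limit_set Z gi (F \<xi>) = limit_set Z gi (F y)"
          using key[OF xi(1)] by blast
        have "v = F ` limit_set X fi y" using xi(2) y(3) trA[OF y(2)] by simp
        moreover have "limit_set X fi y \<in> limit_sets X fi" unfolding limit_sets_def using y(1) by blast
        ultimately show "v \<in> (\<lambda>S. F ` S) ` limit_sets X fi" by blast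
      qed
    qed
    show "\<And>x. x \<in> X \<Longrightarrow> closedin (top_of_set X) {y \<in> X. limit_set Z gi (F y) = limit_set Z gi (F x)}"
      using fiber_closed[OF cbgi cF FZ] by blast
  qed
  have lsX: "limit_set X h \<xi> \<subseteq> X" for h \<xi> unfolding limit_set_def by blast
  have repW: "\<exists>\<xi>0\<in>X. precompact_in X (orbit f \<xi>0) \<and> S = limit_set X f \<xi>0" if S: "S \<in> limit_sets X f" for S
  proof -
    obtain \<xi>0 where "\<xi>0 \<in> basin X f S" "precompact_in X (orbit f \<xi>0)" using fwd S by blast
    then show ?thesis unfolding basin_def by auto
  qed
  have repA: "\<exists>\<xi>0\<in>X. precompact_in X (orbit fi \<xi>0) \<and> S = limit_set X fi \<xi>0" if S: "S \<in> limit_sets X fi" for S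
  proof -
    obtain \<xi>0 where "\<xi>0 \<in> basin X fi S" "precompact_in X (orbit fi \<xi>0)" using bwd S by blast
    then show ?thesis unfolding basin_def by auto
  qed
  have sameW: "S = S'" if HS: "S \<in> limit_sets X f" "S' \<in> limit_sets X f" for S S'
  proof -
    obtain a where a: "a \<in> X" "precompact_in X (orbit f a)" "S = limit_set X f a" using repW[OF HS(1)] by blast
    obtain b where b: "b \<in> X" "precompact_in X (orbit f b)" "S' = limit_set X f b" using repW[OF HS(2)] by blast
    have "F ` S = F ` S'" using trW[OF a(2)] trW[OF b(2)] constW[OF a(1) b(1)] a(3) b(3) by simp
    moreover have "S \<subseteq> X" "S' \<subseteq> X" using a(3) b(3) lsX by auto
    ultimately show ?thesis using inj_on_image_eq_iff[OF injF] by blast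
  qed
  have sameA: "S = S'" if HS: "S \<in> limit_sets X fi" "S' \<in> limit_sets X fi" for S S'
  proof -
    obtain a where a: "a \<in> X" "precompact_in X (orbit fi a)" "S = limit_set X fi a" using repA[OF HS(1)] by blast
    obtain b where b: "b \<in> X" "precompact_in X (orbit fi b)" "S' = limit_set X fi b" using repA[OF HS(2)] by blast
    have "F ` S = F ` S'" using trA[OF a(2)] trA[OF b(2)] constA[OF a(1) b(1)] a(3) b(3) by simp
    moreover have "S \<subseteq> X" "S' \<subseteq> X" using a(3) b(3) lsX by auto
    ultimately show ?thesis using inj_on_image_eq_iff[OF injF] by blast
  qed
  have cross: "\<Omega> = \<Gamma>" if HO: "\<Omega> \<in> limit_sets X f" and HG: "\<Gamma> \<in> limit_sets X fi" for \<Omega> \<Gamma>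
  proof
    obtain a where a: "a \<in> X" "precompact_in X (orbit f a)" "\<Omega> = limit_set X f a" using repW[OF HO] by blast
    obtain b where b: "b \<in> X" "precompact_in X (orbit fi b)" "\<Gamma> = limit_set X fi b" using repA[OF HG] by blast
    obtain y where y: "y \<in> \<Omega>" using limit_set_nonempty[OF a(2)] a(3) by blast
    have aM: "a \<in> M" using a(1) XM by blast
    have "limit_set X fi y \<subseteq> \<Omega>" using limit_sub[OF homf XM aM y[unfolded a(3)]] a(3) by simp
    moreover have yX: "y \<in> X" using y a(3) lsX by blast
    then have "limit_set X fi y \<in> limit_sets X fi" unfolding limit_sets_def by blast
    then have "limit_set X fi y = \<Gamma>" using sameA HG by blast
    ultimately show "\<Gamma> \<subseteq> \<Omega>" by simp
    obtain z where z: "z \<in> \<Gamma>" using limit_set_nonempty[OF b(2)] b(3) by blast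
    have bM: "b \<in> M" using b(1) XM by blast
    have "limit_set X f z \<subseteq> \<Gamma>" using limit_sub[OF homf' XM bM z[unfolded b(3)]] b(3) by simp
    moreover have zX: "z \<in> X" using z b(3) lsX by blast
    then have "limit_set X f z \<in> limit_sets X f" unfolding limit_sets_def by blast
    then have "limit_set X f z = \<Omega>" using sameW HO by blast
    ultimately show "\<Omega> \<subseteq> \<Gamma>" by simp
  qed
  obtain S1 S2 where S: "S1 \<in> limit_sets X f \<union> limit_sets X fi" "S2 \<in> limit_sets X f \<union> limit_sets X fi" "S1 \<noteq> S2"
    using two by blast
  show False
  proof (cases "S1 \<in> limit_sets X f")
    case True
    show False
    proof (cases "S2 \<in> limit_sets X f")
      case True then show False using sameW \<open>S1 \<in> limit_sets X f\<close> S(3) by blast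
    next
      case False then have "S2 \<in> limit_sets X fi" using S(2) by blast
      then show False using cross \<open>S1 \<in> limit_sets X f\<close> S(3) by blast
    qed
  next
    case False
    then have S1A: "S1 \<in> limit_sets X fi" using S(1) by blast
    show False
    proof (cases "S2 \<in> limit_sets X f")
      case True then show False using cross S1A S(3) by metis
    next
      case False then have "S2 \<in> limit_sets X fi" using S(2) by blast
      then show False using sameA S1A S(3) by blast
    qed
  qed
qed

end
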